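(* Let $N\ge 1$. For each $K\in\{0,1,\dots,N\}$ let $h_{n,K}=c_K\sum_{|\gamma|=K}h_\gamma$, where $c_K>0$ is chosen so that $\|h_{n,K}\|=1$. Then each $h_{n,K}$ is an eigenvector of $L(\mathcal{B}_N)$ with eigenvalue $2K$; the vectors $h_{n,K}$, $K=0,\dots,N$, are mutually orthogonal; and each $h_{n,K}$ is orthogonal to every Dirichlet eigenvector of $L(\mathcal{B}_N)$.
   Context: $L(\mathcal{B}_N)$ is the unnormalized Laplacian $(Lf)(v)=\sum_{w\sim v}[f(v)-f(w)]$ of the Boolean cube $\mathcal{B}_N$, whose vertex set is $\mathbb{Z}_2^N$ with $v\sim w$ iff $v-w=e_i$ for some standard basis vector $e_i$. For $\gamma\in\mathbb{Z}_2^N$, $|\gamma|$ denotes the number of coordinates of $\gamma$ equal to $1$, and $h_\gamma(v)=2^{-N/2}(-1)^{\langle v,\gamma\rangle}$ is the corresponding Hadamard vector (an eigenvector of $L(\mathcal{B}_N)$ with eigenvalue $2|\gamma|$); the $h_\gamma$ form an orthonormal basis of $\ell^2(\mathcal{B}_N)$. A Dirichlet eigenvector of $L(\mathcal{B}_N)$ is an eigenvector of $L(\mathcal{B}_N)$ vanishing at $\mathbf{0}=(0,\dots,0)$ and at $\mathbf{1}=(1,\dots,1)$. Inner products are the standard ones on $\mathbb{C}^{V}$. *)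

theory Defs
  imports "HOL-Analysis.Analysis"
begin

text \<open>Vertices of the Boolean cube B_N: elements of Z_2^N, represented as
  functions nat => bool supported in {0..<N}.\<close>
definition cube :: "nat \<Rightarrow> (nat \<Rightarrow> bool) set" where
  "cube N = {v. \<forall>i. v i \<longrightarrow> i < N}"

definition zero_vtx :: "nat \<Rightarrow> bool" where
  "zero_vtx = (\<lambda>i. False)"

definition one_vtx :: "nat \<Rightarrow> (nat \<Rightarrow> bool)" where
  "one_vtx N = (\<lambda>i. i < N)"

definition weight :: "(nat \<Rightarrow> bool) \<Rightarrow> nat" where
  "weight g = card {i. g i}"

definition lap :: "nat \<Rightarrow> ((nat \<Rightarrow> bool) \<Rightarrow> complex) \<Rightarrow> (nat \<Rightarrow> bool) \<Rightarrow> complex" where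
  "lap N f v = (\<Sum>i<N. f v - f (v(i := \<not> v i)))"

definition hada :: "nat \<Rightarrow> (nat \<Rightarrow> bool) \<Rightarrow> (nat \<Rightarrow> bool) \<Rightarrow> complex" where
  "hada N g v = complex_of_real (1 / sqrt (2 ^ N)) * (-1) ^ card {i. v i \<and> g i}"

definition cinner :: "nat \<Rightarrow> ((nat \<Rightarrow> bool) \<Rightarrow> complex) \<Rightarrow> ((nat \<Rightarrow> bool) \<Rightarrow> complex) \<Rightarrow> complex" where
  "cinner N f g = (\<Sum>v\<in>cube N. f v * cnj (g v))"

definition cnorm :: "nat \<Rightarrow> ((nat \<Rightarrow> bool) \<Rightarrow> complex) \<Rightarrow> real" where
  "cnorm N f = sqrt (Re (cinner N f f))"

definition is_eigvec :: "nat \<Rightarrow> complex \<Rightarrow> ((nat \<Rightarrow> bool) \<Rightarrow> complex) \<Rightarrow> bool" where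
  "is_eigvec N lam f \<longleftrightarrow> (\<exists>v\<in>cube N. f v \<noteq> 0) \<and> (\<forall>v\<in>cube N. lap N f v = lam * f v)"

definition is_dirichlet_eigvec :: "nat \<Rightarrow> ((nat \<Rightarrow> bool) \<Rightarrow> complex) \<Rightarrow> bool" where
  "is_dirichlet_eigvec N f \<longleftrightarrow> (\<exists>lam. is_eigvec N lam f) \<and> f zero_vtx = 0 \<and> f (one_vtx N) = 0"

definition hsum :: "nat \<Rightarrow> nat \<Rightarrow> (nat \<Rightarrow> bool) \<Rightarrow> complex" where
  "hsum N K v = (\<Sum>g\<in>{g\<in>cube N. weight g = K}. hada N g v)"

end

theory Submission
  imports Defs
begin

lemma finite_cube: "finite (cube N)"
proof -
  have "cube N \<subseteq> (\<lambda>S i. i \<in> S) ` Pow {..<N}"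
  proof
    fix v assume "v \<in> cube N"
    hence "v = (\<lambda>i. i \<in> {i. v i})" "{i. v i} \<in> Pow {..<N}" by (auto simp: cube_def)
    thus "v \<in> (\<lambda>S i. i \<in> S) ` Pow {..<N}" by blast
  qed
  thus ?thesis by (rule finite_subset) auto
qed

lemma flip_cube: "i < N \<Longrightarrow> v \<in> cube N \<Longrightarrow> v(i := \<not> v i) \<in> cube N"
  by (auto simp: cube_def)

lemma sign_flip:
  assumes "finite {j. a j \<and> b j}"
  shows "((-1::complex) ^ card {j. (a(i := \<not> a i)) j \<and> b j}) = (if b i then -1 else 1) * (-1) ^ card {j. a j \<and> b j}"
proof (cases "b i")
  case False
  hence "{j. (a(i := \<not> a i)) j \<and> b j} = {j. a j \<and> b j}" by auto
  thus ?thesis using False by simp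
next
  case True
  show ?thesis
  proof (cases "a i")
    case True
    hence e: "{j. (a(i := \<not> a i)) j \<and> b j} = {j. a j \<and> b j} - {i}" by auto
    have "card {j. a j \<and> b j} \<ge> 1" using assms True \<open>b i\<close>
      by (metis (mono_tags, lifting) card_0_eq empty_iff less_one mem_Collect_eq not_le)
    then obtain m where m: "card {j. a j \<and> b j} = Suc m" by (metis Suc_le_D One_nat_def)
    have "card ({j. a j \<and> b j} - {i}) = m" using m True \<open>b i\<close> assms by simp
    thus ?thesis using e m \<open>b i\<close> by simp
  next
    case False
    hence e: "{j. (a(i := \<not> a i)) j \<and> b j} = insert i {j. a j \<and> b j}" using \<open>b i\<close> by auto
    have "card (insert i {j. a j \<and> b j}) = Suc (card {j. a j \<and> b j})" using False assms by simp
    thus ?thesis using e \<open>b i\<close> by simp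
  qed
qed

lemma fin_inter: "g \<in> cube N \<Longrightarrow> finite {j. v j \<and> g j}"
  by (rule finite_subset[of _ "{..<N}"]) (auto simp: cube_def)

lemma hada_flip: "g \<in> cube N \<Longrightarrow> hada N g (v(i := \<not> v i)) = (if g i then -1 else 1) * hada N g v"
  unfolding hada_def using sign_flip[OF fin_inter, of g N v i] by simp

lemma lap_hada: assumes "g \<in> cube N" shows "lap N (hada N g) v = of_nat (2 * weight g) * hada N g v"
proof -
  have "lap N (hada N g) v = (\<Sum>i<N. if g i then 2 * hada N g v else 0)"
    unfolding lap_def using assms by (intro sum.cong) (auto simp: hada_flip)
  also have "\<dots> = (\<Sum>i\<in>{i\<in>{..<N}. g i}. 2 * hada N g v)"
    by (rule sum.inter_filter[symmetric]) simp
  also have "{i\<in>{..<N}. g i} = {i. g i}" using assms by (auto simp: cube_def)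
  finally show ?thesis by (simp add: weight_def mult_ac)
qed

lemma lap_scale: "lap N (\<lambda>v. a * f v) v = a * lap N f v"
  unfolding lap_def by (simp add: sum_distrib_left algebra_simps)

lemma lap_sum: "lap N (\<lambda>v. \<Sum>g\<in>S. F g v) v = (\<Sum>g\<in>S. lap N (F g) v)"
  unfolding lap_def by (simp add: sum_subtractf[symmetric] sum.swap[of _ S])

lemma lap_cnj: "lap N (\<lambda>v. cnj (f v)) v = cnj (lap N f v)"
  unfolding lap_def by simp

lemma lap_hsum: "lap N (hsum N K) v = of_nat (2 * K) * hsum N K v"
proof -
  have "lap N (hsum N K) v = (\<Sum>g\<in>{g\<in>cube N. weight g = K}. lap N (hada N g) v)"
    unfolding hsum_def by (rule lap_sum)
  also have "\<dots> = (\<Sum>g\<in>{g\<in>cube N. weight g = K}. of_nat (2 * K) * hada N g v)"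
    by (intro sum.cong) (auto simp: lap_hada)
  finally show ?thesis by (simp add: hsum_def sum_distrib_left)
qed

lemma flip_sum:
  assumes "i < N"
  shows "(\<Sum>v\<in>cube N. F (v(i := \<not> v i))) = (\<Sum>v\<in>cube N. F v)"
  by (rule sum.reindex_bij_witness[where i="\<lambda>v. v(i := \<not> v i)" and j="\<lambda>v. v(i := \<not> v i)"])
     (auto simp: flip_cube assms)

lemma selfadj:
  "(\<Sum>v\<in>cube N. lap N f v * u v) = (\<Sum>v\<in>cube N. f v * lap N u v)"
proof -
  have A: "(\<Sum>v\<in>cube N. lap N f v * u v) =
     (\<Sum>i<N. (\<Sum>v\<in>cube N. f v * u v) - (\<Sum>v\<in>cube N. f (v(i := \<not> v i)) * u v))"
  proof -
    have "(\<Sum>v\<in>cube N. lap N f v * u v) = (\<Sum>v\<in>cube N. \<Sum>i<N. f v * u v - f (v(i := \<not> v i)) * u v)"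
      unfolding lap_def by (simp add: sum_distrib_right left_diff_distrib)
    also have "\<dots> = (\<Sum>i<N. \<Sum>v\<in>cube N. f v * u v - f (v(i := \<not> v i)) * u v)"
      by (rule sum.swap)
    finally show ?thesis by (simp add: sum_subtractf)
  qed
  have B: "(\<Sum>v\<in>cube N. f v * lap N u v) =
     (\<Sum>i<N. (\<Sum>v\<in>cube N. f v * u v) - (\<Sum>v\<in>cube N. f v * u (v(i := \<not> v i))))"
  proof -
    have "(\<Sum>v\<in>cube N. f v * lap N u v) = (\<Sum>v\<in>cube N. \<Sum>i<N. f v * u v - f v * u (v(i := \<not> v i)))"
      unfolding lap_def by (simp add: sum_distrib_left algebra_simps)
    also have "\<dots> = (\<Sum>i<N. \<Sum>v\<in>cube N. f v * u v - f v * u (v(i := \<not> v i)))"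
      by (rule sum.swap)
    finally show ?thesis by (simp add: sum_subtractf)
  qed
  have C: "(\<Sum>v\<in>cube N. f (v(i := \<not> v i)) * u v) = (\<Sum>v\<in>cube N. f v * u (v(i := \<not> v i)))"
    if "i < N" for i
    using flip_sum[OF that, of "\<lambda>v. f v * u (v(i := \<not> v i))"] by simp
  show ?thesis unfolding A B by (intro sum.cong) (auto simp: C)
qed

lemma char_sum:
  assumes "v \<in> cube N" "v \<noteq> zero_vtx"
  shows "(\<Sum>g\<in>cube N. hada N g v) = 0"
proof -
  obtain i where "v i" using assms(2) by (auto simp: zero_vtx_def)
  hence i: "i < N" using assms(1) by (auto simp: cube_def)
  have neg: "hada N (g(i := \<not> g i)) v = - hada N g v" if "g \<in> cube N" for g
  proof -
    have e: "{j. v j \<and> (g(i := \<not> g i)) j} = {j. (g(i := \<not> g i)) j \<and> v j}"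
        "{j. v j \<and> g j} = {j. g j \<and> v j}" by auto
    have "finite {j. g j \<and> v j}" using fin_inter[OF that, of v] by (simp add: conj_commute)
    from sign_flip[OF this, of i] show ?thesis unfolding hada_def e using \<open>v i\<close> by simp
  qed
  have "(\<Sum>g\<in>cube N. hada N g v) = (\<Sum>g\<in>cube N. hada N (g(i := \<not> g i)) v)"
    using flip_sum[OF i, of "\<lambda>g. hada N g v"] by simp
  also have "\<dots> = - (\<Sum>g\<in>cube N. hada N g v)" by (simp add: neg sum_negf[symmetric])
  finally show ?thesis by simp
qed


lemma lap_h: "lap N (\<lambda>v. complex_of_real a * hsum N K v) v = of_nat (2 * K) * (complex_of_real a * hsum N K v)"
  by (simp add: lap_scale lap_hsum)

theorem lemma3:
  fixes N :: nat and c :: "nat \<Rightarrow> real"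
  assumes "N \<ge> 1"
    and "\<And>K. K \<le> N \<Longrightarrow> c K > 0"
    and "\<And>K. K \<le> N \<Longrightarrow> cnorm N (\<lambda>v. complex_of_real (c K) * hsum N K v) = 1"
  defines "h \<equiv> (\<lambda>K v. complex_of_real (c K) * hsum N K v)"
  shows "(\<forall>K\<le>N. is_eigvec N (of_nat (2 * K)) (h K))
       \<and> (\<forall>K\<le>N. \<forall>K'\<le>N. K \<noteq> K' \<longrightarrow> cinner N (h K) (h K') = 0)
       \<and> (\<forall>K\<le>N. \<forall>f. is_dirichlet_eigvec N f \<longrightarrow> cinner N (h K) f = 0)"
proof (intro conjI allI impI)
  have laph: "lap N (h K) v = of_nat (2 * K) * h K v" for K v
    unfolding h_def by (rule lap_h)
  fix K assume K: "K \<le> N"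
  show "is_eigvec N (of_nat (2 * K)) (h K)"
    unfolding is_eigvec_def
  proof (intro conjI ballI)
    show "\<exists>v\<in>cube N. h K v \<noteq> 0"
    proof (rule ccontr)
      assume "\<not> ?thesis"
      hence "cinner N (h K) (h K) = 0" unfolding cinner_def by simp
      hence "cnorm N (h K) = 0" unfolding cnorm_def by simp
      thus False using assms(3)[OF K] unfolding h_def by simp
    qed
  qed (rule laph)
next
  have laph: "lap N (h K) v = of_nat (2 * K) * h K v" for K v
    unfolding h_def by (rule lap_h)
  fix K K' assume K: "K \<le> N" and K': "K' \<le> N" and ne: "K \<noteq> K'"
  have "(\<Sum>v\<in>cube N. lap N (h K) v * cnj (h K' v)) = (\<Sum>v\<in>cube N. h K v * lap N (\<lambda>v. cnj (h K' v)) v)"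
    by (rule selfadj)
  hence "of_nat (2 * K) * cinner N (h K) (h K') = of_nat (2 * K') * cinner N (h K) (h K')"
    unfolding cinner_def lap_cnj laph by (simp add: sum_distrib_left mult_ac)
  thus "cinner N (h K) (h K') = 0" using ne by simp
next
  fix K f assume K: "K \<le> N" and D: "is_dirichlet_eigvec N f"
  then obtain lam where ev: "\<forall>v\<in>cube N. lap N f v = lam * f v" and f0: "f zero_vtx = 0"
    unfolding is_dirichlet_eigvec_def is_eigvec_def by blast
  define b where "b g = (\<Sum>v\<in>cube N. hada N g v * cnj (f v))" for g
  have bz: "b g = 0" if g: "g \<in> cube N" and w: "of_nat (2 * weight g) \<noteq> cnj lam" for g
  proof -
    have "(\<Sum>v\<in>cube N. lap N (hada N g) v * cnj (f v)) = (\<Sum>v\<in>cube N. hada N g v * lap N (\<lambda>v. cnj (f v)) v)"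
      by (rule selfadj)
    also have "\<dots> = (\<Sum>v\<in>cube N. hada N g v * (cnj lam * cnj (f v)))"
      using ev by (intro sum.cong) (auto simp: lap_cnj)
    finally have "of_nat (2 * weight g) * b g = cnj lam * b g"
      unfolding b_def lap_hada[OF g] by (simp add: sum_distrib_left mult_ac)
    thus ?thesis using w by simp
  qed
  have ci: "cinner N (h K) f = c K * (\<Sum>g\<in>{g\<in>cube N. weight g = K}. b g)"
  proof -
    have "cinner N (h K) f = (\<Sum>v\<in>cube N. \<Sum>g\<in>{g\<in>cube N. weight g = K}. c K * (hada N g v * cnj (f v)))"
      unfolding cinner_def h_def hsum_def by (simp add: sum_distrib_left sum_distrib_right mult_ac)
    also have "\<dots> = (\<Sum>g\<in>{g\<in>cube N. weight g = K}. \<Sum>v\<in>cube N. c K * (hada N g v * cnj (f v)))"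
      by (rule sum.swap)
    finally show ?thesis unfolding b_def by (simp add: sum_distrib_left)
  qed
  show "cinner N (h K) f = 0"
  proof (cases "of_nat (2 * K) = cnj lam")
    case False
    thus ?thesis unfolding ci by (simp add: bz)
  next
    case True
    have "(\<Sum>g\<in>{g\<in>cube N. weight g = K}. b g) = (\<Sum>g\<in>cube N. b g)"
      by (rule sum.mono_neutral_left) (auto simp: finite_cube True[symmetric] bz)
    also have "\<dots> = (\<Sum>v\<in>cube N. cnj (f v) * (\<Sum>g\<in>cube N. hada N g v))"
      unfolding b_def sum_distrib_left by (subst sum.swap) (simp add: mult_ac)
    also have "\<dots> = 0"
    proof (rule sum.neutral, rule ballI)
      fix v assume "v \<in> cube N"
      thus "cnj (f v) * (\<Sum>g\<in>cube N. hada N g v) = 0"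
        using f0 char_sum[of v N] by (cases "v = zero_vtx") auto
    qed
    finally show ?thesis unfolding ci by simp
  qed
qed

end
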